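(* Assume (A1) and (A2). Let $\psi$ be a graph functional with finite support, let $K$ be such that $\psi(H)=0$ whenever $e(H)\ge K$, let $M:=\sup_H|\psi(H)|<\infty$, and let $\Psi(G):=\sum_{v\in V(G)}\psi(\mathcal C(v))$. Let $V$ be a uniformly random vertex of $G^*(n,\mathbf d)$. Then for $n$ so large that $N\ge\mu n/2$ and $N\ge4K$, with $c:=4+16/\mu$, $$\mathrm{Var}\big(\Psi(G^*(n,\mathbf d))\big)\le cMK^2\,E|\psi(\mathcal C(V))|\,n.$$
   Context: For each $n\ge1$ a degree sequence $\mathbf d=(d_1,\dots,d_n)$ of non-negative integers is given, with even sum $N:=\sum_id_i$. $G^*(n,\mathbf d)$ is the configuration-model multigraph on $v_1,\dots,v_n$: $v_i$ receives $d_i$ half-edges, a uniformly random perfect matching of all half-edges gives the edges (loops and multiple edges allowed). $n_k:=|\{i:d_i=k\}|$, $D_n$ with $P(D_n=k)=n_k/n$. (A1) there is a probability distribution $(p_k)$ with $n_k/n\to p_k$ for all $k$ and $\mu:=\sum_kkp_k\in(0,\infty)$. (A2) $E D_n\to\mu$. A graph functional is a real function on unlabelled multigraphs; finite support means $\psi(H)\ne0$ for only finitely many unlabelled $H$. $\mathcal C(v)$ is the component containing $v$. *)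

theory Defs
  imports "HOL-Probability.Probability" "HOL-Library.Uprod" "HOL-Library.Multiset"
begin

text \<open>Multigraphs on vertices of type nat: a vertex set and a multiset of unordered
  pairs (edges; a loop at v is Upair v v).\<close>
type_synonym mgraph = "nat set \<times> nat uprod multiset"

definition wf_mgraph :: "mgraph \<Rightarrow> bool" where
  "wf_mgraph G \<longleftrightarrow> finite (fst G) \<and> (\<forall>e\<in>#snd G. set_uprod e \<subseteq> fst G)"

definition num_edges :: "mgraph \<Rightarrow> nat" where
  "num_edges G = size (snd G)"

definition mgraph_iso :: "mgraph \<Rightarrow> mgraph \<Rightarrow> bool" where
  "mgraph_iso G H \<longleftrightarrow> (\<exists>f. bij_betw f (fst G) (fst H) \<and> image_mset (map_uprod f) (snd G) = snd H)"

text \<open>A graph functional: a real function on unlabelled multigraphs, i.e. an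
  isomorphism-invariant function on (well-formed) labelled multigraphs.\<close>
definition graph_functional :: "(mgraph \<Rightarrow> real) \<Rightarrow> bool" where
  "graph_functional \<psi> \<longleftrightarrow>
     (\<forall>G H. wf_mgraph G \<longrightarrow> wf_mgraph H \<longrightarrow> mgraph_iso G H \<longrightarrow> \<psi> G = \<psi> H)"

definition finite_support :: "(mgraph \<Rightarrow> real) \<Rightarrow> bool" where
  "finite_support \<psi> \<longleftrightarrow>
     (\<exists>S. finite S \<and> (\<forall>G. wf_mgraph G \<longrightarrow> \<psi> G \<noteq> 0 \<longrightarrow> (\<exists>H\<in>S. mgraph_iso G H)))"

definition adjacent :: "mgraph \<Rightarrow> nat \<Rightarrow> nat \<Rightarrow> bool" where
  "adjacent G u w \<longleftrightarrow> Upair u w \<in># snd G"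

definition comp_vertices :: "mgraph \<Rightarrow> nat \<Rightarrow> nat set" where
  "comp_vertices G v = {u \<in> fst G. (adjacent G)\<^sup>*\<^sup>* v u}"

definition component :: "mgraph \<Rightarrow> nat \<Rightarrow> mgraph" where
  "component G v = (comp_vertices G v, filter_mset (\<lambda>e. set_uprod e \<subseteq> comp_vertices G v) (snd G))"

text \<open>Half-edges of the configuration model: (i,j) is the j-th half-edge of vertex v_i.\<close>
definition half_edges :: "nat \<Rightarrow> (nat \<Rightarrow> nat) \<Rightarrow> (nat \<times> nat) set" where
  "half_edges n d = {(i, j). i < n \<and> j < d i}"

definition perfect_matchings :: "'a set \<Rightarrow> 'a set set set" where
  "perfect_matchings S =
     {P. (\<forall>e\<in>P. e \<subseteq> S \<and> card e = 2) \<and> (\<forall>x\<in>S. \<exists>!e. e \<in> P \<and> x \<in> e)}"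

definition edge_of_pair :: "(nat \<times> nat) set \<Rightarrow> nat uprod" where
  "edge_of_pair e = (THE u. \<exists>a b. e = {a, b} \<and> a \<noteq> b \<and> u = Upair (fst a) (fst b))"

definition config_graph :: "nat \<Rightarrow> (nat \<times> nat) set set \<Rightarrow> mgraph" where
  "config_graph n P = ({..<n}, image_mset edge_of_pair (mset_set P))"

definition config_matching :: "nat \<Rightarrow> (nat \<Rightarrow> nat) \<Rightarrow> (nat \<times> nat) set set pmf" where
  "config_matching n d = pmf_of_set (perfect_matchings (half_edges n d))"

definition config_model :: "nat \<Rightarrow> (nat \<Rightarrow> nat) \<Rightarrow> mgraph pmf" where
  "config_model n d = map_pmf (config_graph n) (config_matching n d)"

definition Psi :: "(mgraph \<Rightarrow> real) \<Rightarrow> mgraph \<Rightarrow> real" where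
  "Psi \<psi> G = (\<Sum>v\<in>fst G. \<psi> (component G v))"

end

theory Submission
  imports Defs
begin


definition invs :: "'a set \<Rightarrow> ('a \<Rightarrow> 'a) set" where
  "invs S = {f. (\<forall>x\<in>S. f x \<in> S \<and> f x \<noteq> x \<and> f (f x) = x) \<and> (\<forall>x. x \<notin> S \<longrightarrow> f x = x)}"

definition pairs_of :: "'a set \<Rightarrow> ('a \<Rightarrow> 'a) \<Rightarrow> 'a set set" where
  "pairs_of S f = (\<lambda>x. {x, f x}) ` S"

lemma invsD: assumes "f \<in> invs S" "x \<in> S" shows "f x \<in> S" "f x \<noteq> x" "f (f x) = x"
  using assms by (auto simp: invs_def)

lemma invs_out: "f \<in> invs S \<Longrightarrow> x \<notin> S \<Longrightarrow> f x = x"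
  by (auto simp: invs_def)

lemma finite_invs: assumes "finite S" shows "finite (invs S)"
proof -
  let ?h = "\<lambda>f x. if x \<in> S then f x else undefined"
  have "?h ` invs S \<subseteq> {g. \<forall>x. (x \<in> S \<longrightarrow> g x \<in> S) \<and> (x \<notin> S \<longrightarrow> g x = undefined)}"
    by (auto simp: invs_def)
  hence "finite (?h ` invs S)" using finite_set_of_finite_funs[OF assms assms] finite_subset by blast
  moreover have "inj_on ?h (invs S)"
  proof (rule inj_onI)
    fix f g assume fg: "f \<in> invs S" "g \<in> invs S" "?h f = ?h g"
    show "f = g"
    proof
      fix x show "f x = g x"
        using fun_cong[OF fg(3), of x] fg(1,2) by (cases "x \<in> S") (auto simp: invs_def)
    qed
  qed
  ultimately show ?thesis using finite_imageD by blast
qed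

lemma invs_nonempty: assumes "finite S" "even (card S)" shows "invs S \<noteq> {}"
  using assms
proof (induction "card S" arbitrary: S rule: less_induct)
  case less
  show ?case
  proof (cases "S = {}")
    case True
    hence "id \<in> invs S" by (auto simp: invs_def)
    thus ?thesis by blast
  next
    case False
    then obtain a where a: "a \<in> S" by blast
    have "card S \<noteq> 1" using less.prems by auto
    hence "S \<noteq> {a}" by auto
    hence "S - {a} \<noteq> {}" using a by blast
    then obtain b where b: "b \<in> S" "b \<noteq> a" by blast
    let ?S = "S - {a, b}"
    have c: "card ?S = card S - 2" using a b less.prems(1) by (simp add: card_Diff_subset)
    have "card {a, b} \<le> card S" using a b less.prems(1) by (intro card_mono) auto
    hence "card S \<ge> 2" using b by simp
    hence "card ?S < card S" "even (card ?S)" using c less.prems by auto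
    then obtain g where g: "g \<in> invs ?S" using less.hyps less.prems(1) by blast
    define f where "f = g(a := b, b := a)"
    have "f \<in> invs S" using g a b unfolding invs_def f_def by auto
    thus ?thesis by blast
  qed
qed

lemma pairs_of_pm: assumes "f \<in> invs S" shows "pairs_of S f \<in> perfect_matchings S"
  unfolding perfect_matchings_def pairs_of_def
proof (intro CollectI conjI ballI)
  fix e assume "e \<in> (\<lambda>x. {x, f x}) ` S"
  then obtain x where x: "x \<in> S" "e = {x, f x}" by blast
  thus "e \<subseteq> S" "card e = 2" using invsD[OF assms x(1)] by (auto simp: card_insert_if)
next
  fix y assume y: "y \<in> S"
  show "\<exists>!e. e \<in> (\<lambda>x. {x, f x}) ` S \<and> y \<in> e"
  proof (rule ex1I[of _ "{y, f y}"])
    show "{y, f y} \<in> (\<lambda>x. {x, f x}) ` S \<and> y \<in> {y, f y}" using y by auto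
  next
    fix e assume "e \<in> (\<lambda>x. {x, f x}) ` S \<and> y \<in> e"
    then obtain x where "x \<in> S" "e = {x, f x}" "y \<in> e" by blast
    thus "e = {y, f y}" using invsD[OF assms \<open>x \<in> S\<close>] by auto
  qed
qed

lemma pairs_of_inj: "inj_on (pairs_of S) (invs S)"
proof (rule inj_onI)
  fix f g assume f: "f \<in> invs S" and g: "g \<in> invs S" and e: "pairs_of S f = pairs_of S g"
  show "f = g"
  proof
    fix x show "f x = g x"
    proof (cases "x \<in> S")
      case True
      hence "{x, f x} \<in> pairs_of S g" using e by (auto simp: pairs_of_def)
      then obtain y where y: "y \<in> S" "{x, f x} = {y, g y}" by (auto simp: pairs_of_def)
      show ?thesis using y invsD[OF g y(1)] invsD[OF f True] by (auto simp: doubleton_eq_iff)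
    next
      case False thus ?thesis using f g by (simp add: invs_out)
    qed
  qed
qed

lemma pairs_of_surj: assumes P: "P \<in> perfect_matchings S" shows "\<exists>f\<in>invs S. P = pairs_of S f"
proof -
  have ex: "\<exists>!e. e \<in> P \<and> x \<in> e" if "x \<in> S" for x using P that by (auto simp: perfect_matchings_def)
  have sub: "e \<subseteq> S" "card e = 2" if "e \<in> P" for e using P that by (auto simp: perfect_matchings_def)
  have oth: "\<exists>!y. {x, y} \<in> P \<and> y \<noteq> x" if x: "x \<in> S" for x
  proof -
    obtain e where e: "e \<in> P" "x \<in> e" using ex[OF x] by blast
    then obtain y where y: "e = {x, y}" "y \<noteq> x" using sub(2)[OF e(1)]
      by (metis card_2_iff doubleton_eq_iff insertE singletonD)
    show ?thesis
    proof (rule ex1I[of _ y])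
      show "{x, y} \<in> P \<and> y \<noteq> x" using e y by simp
    next
      fix z assume z: "{x, z} \<in> P \<and> z \<noteq> x"
      hence "{x, z} = e" using ex[OF x] e by blast
      thus "z = y" using y z by (auto simp: doubleton_eq_iff)
    qed
  qed
  define f where "f x = (if x \<in> S then (THE y. {x, y} \<in> P \<and> y \<noteq> x) else x)" for x
  have fx: "{x, f x} \<in> P" "f x \<noteq> x" if "x \<in> S" for x
    using theI'[OF oth[OF that]] that by (auto simp: f_def)
  have fS: "f x \<in> S" if "x \<in> S" for x using sub(1)[OF fx(1)[OF that]] by auto
  have ff: "f (f x) = x" if "x \<in> S" for x
  proof -
    have "{f x, f (f x)} \<in> P" "f (f x) \<noteq> f x" using fx[OF fS[OF that]] by auto
    moreover have "{f x, x} \<in> P" using fx[OF that] by (simp add: insert_commute)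
    ultimately show ?thesis using oth[OF fS[OF that]] fx[OF that] by metis
  qed
  have f: "f \<in> invs S" using fS fx ff by (auto simp: invs_def f_def)
  have "P = pairs_of S f"
  proof
    show "pairs_of S f \<subseteq> P" using fx by (auto simp: pairs_of_def)
  next
    show "P \<subseteq> pairs_of S f"
    proof
      fix e assume e: "e \<in> P"
      obtain x y where xy: "e = {x, y}" "x \<noteq> y" using sub(2)[OF e] by (metis card_2_iff)
      have x: "x \<in> S" using sub(1)[OF e] xy by auto
      have "y = f x" using oth[OF x] fx[OF x] e xy by metis
      thus "e \<in> pairs_of S f" using xy x by (auto simp: pairs_of_def)
    qed
  qed
  thus ?thesis using f by blast
qed

lemma pairs_of_bij: "bij_betw (pairs_of S) (invs S) (perfect_matchings S)"
  unfolding bij_betw_def using pairs_of_inj pairs_of_pm pairs_of_surj by blast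




definition sw :: "'a \<Rightarrow> 'a \<Rightarrow> ('a \<Rightarrow> 'a) \<Rightarrow> ('a \<Rightarrow> 'a)" where
  "sw a c f = (if f a = c then f else f(a := c, c := a, f a := f c, f c := f a))"

lemma sw_facts:
  assumes f: "f \<in> invs S" and a: "a \<in> S" and c: "c \<in> S" and ac: "a \<noteq> c"
  shows "sw a c f \<in> invs S" "sw a c f a = c"
    "\<And>x. x \<noteq> a \<Longrightarrow> x \<noteq> c \<Longrightarrow> x \<noteq> f a \<Longrightarrow> x \<noteq> f c \<Longrightarrow> sw a c f x = f x"
    "f a \<noteq> c \<Longrightarrow> sw a c f (f a) = f c"
    "f a \<noteq> c \<Longrightarrow> sw a c f (f c) = f a"
    "sw a (f a) (sw a c f) = f"
proof -
  have fa: "f a \<in> S" "f a \<noteq> a" "f (f a) = a" using invsD[OF f a] by auto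
  have fc: "f c \<in> S" "f c \<noteq> c" "f (f c) = c" using invsD[OF f c] by auto
  have fx: "f x \<in> S" "f x \<noteq> x" "f (f x) = x" if "x \<in> S" for x using invsD[OF f that] by auto
  have fo: "f x = x" if "x \<notin> S" for x using invs_out[OF f that] .
  show "sw a c f \<in> invs S"
  proof (cases "f a = c")
    case True thus ?thesis using f by (simp add: sw_def)
  next
    case False
    have d: "f c \<noteq> a" "f a \<noteq> f c" using False fa fc ac by metis+
    show ?thesis unfolding invs_def sw_def using False
    proof (intro CollectI conjI ballI allI impI, goal_cases)
      case (1 x) thus ?case using fx[OF 1(2)] a c fa fc ac d by (auto)
    next
      case (2 x) thus ?case using fx[OF 2(2)] a c fa fc ac d by (auto)
    next
      case (3 x) thus ?case using fx[OF 3(2)] a c fa fc ac d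
        by (auto)
    next
      case (4 x) thus ?case using fo[OF 4(2)] a c fa fc by auto
    qed
  qed
  show "sw a c f a = c" using fa fc ac by (auto simp: sw_def)
  show "\<And>x. x \<noteq> a \<Longrightarrow> x \<noteq> c \<Longrightarrow> x \<noteq> f a \<Longrightarrow> x \<noteq> f c \<Longrightarrow> sw a c f x = f x"
    by (auto simp: sw_def)
  show "f a \<noteq> c \<Longrightarrow> sw a c f (f a) = f c" using fa fc ac by (auto simp: sw_def)
  show "f a \<noteq> c \<Longrightarrow> sw a c f (f c) = f a" using fa fc ac by (auto simp: sw_def)
  show "sw a (f a) (sw a c f) = f"
  proof (cases "f a = c")
    case True thus ?thesis by (simp add: sw_def)
  next
    case False
    have d: "f c \<noteq> a" "f a \<noteq> f c" using False fa fc ac by metis+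
    show ?thesis using False d fa fc ac by (auto simp: sw_def fun_eq_iff)
  qed
qed

definition elems :: "('a \<times> 'a) list \<Rightarrow> 'a set" where
  "elems xs = set (concat (map (\<lambda>p. [fst p, snd p]) xs))"

definition okl :: "'a set \<Rightarrow> ('a \<times> 'a) list \<Rightarrow> bool" where
  "okl S xs \<longleftrightarrow> distinct (concat (map (\<lambda>p. [fst p, snd p]) xs)) \<and> elems xs \<subseteq> S"

definition FF :: "'a set \<Rightarrow> ('a \<times> 'a) list \<Rightarrow> ('a \<Rightarrow> 'a) set" where
  "FF S xs = {f \<in> invs S. \<forall>p\<in>set xs. f (fst p) = snd p}"

lemma elems_Cons[simp]: "elems (p # xs) = insert (fst p) (insert (snd p) (elems xs))"
  by (auto simp: elems_def)

lemma elems_Nil[simp]: "elems [] = {}" by (simp add: elems_def)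

lemma okl_Cons: "okl S (p # xs) \<longleftrightarrow> okl S xs \<and> fst p \<noteq> snd p \<and> fst p \<notin> elems xs \<and> snd p \<notin> elems xs
   \<and> fst p \<in> S \<and> snd p \<in> S"
  by (auto simp: okl_def elems_def)

lemma FF_closed:
  assumes f: "f \<in> FF S xs" and y: "y \<in> S" "y \<notin> elems xs"
  shows "f y \<notin> elems xs"
proof
  assume "f y \<in> elems xs"
  then obtain p where p: "p \<in> set xs" "f y = fst p \<or> f y = snd p" by (auto simp: elems_def)
  have fi: "f \<in> invs S" "f (fst p) = snd p" using f p by (auto simp: FF_def)
  have "fst p \<in> S" if "snd p \<in> S" using that fi invs_out by metis
  show False
  proof (cases "f y = fst p")
    case True
    hence "y = snd p" using fi invsD[OF fi(1) y(1)] by metis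
    thus False using y p by (auto simp: elems_def)
  next
    case False
    hence "f y = snd p" using p by auto
    hence "f (f y) = f (snd p)" by simp
    moreover have "f (snd p) = fst p"
    proof (cases "fst p \<in> S")
      case True thus ?thesis using invsD[OF fi(1) True] fi by metis
    next
      case False thus ?thesis using fi invs_out[OF fi(1) False] by (metis invs_out)
    qed
    ultimately have "y = fst p" using invsD[OF fi(1) y(1)] by metis
    thus False using y p by (auto simp: elems_def)
  qed
qed

lemma step_count:
  fixes h :: "('a \<Rightarrow> 'a) \<Rightarrow> real"
  assumes S: "finite S" and ok: "okl S ((a, c) # xs)"
  shows "(\<Sum>f\<in>FF S xs. h (sw a c f)) = real (card (S - elems xs - {a})) * (\<Sum>g\<in>FF S ((a, c) # xs). h g)"
proof -
  have okx: "okl S xs" and ac: "a \<noteq> c" "a \<notin> elems xs" "c \<notin> elems xs" "a \<in> S" "c \<in> S"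
    using ok by (auto simp: okl_Cons)
  have exS: "elems xs \<subseteq> S" using okx by (simp add: okl_def)
  define U where "U = S - elems xs - {a}"
  define Phi where "Phi f = (sw a c f, f a)" for f
  define Gam where "Gam p = sw a (snd p) (fst p)" for p
  have bij: "bij_betw Phi (FF S xs) (FF S ((a, c) # xs) \<times> U)"
  proof (rule bij_betw_byWitness[where f' = Gam])
    show "\<forall>f\<in>FF S xs. Gam (Phi f) = f"
      using sw_facts(6) ac unfolding Gam_def Phi_def FF_def by auto
    show "\<forall>p\<in>FF S ((a, c) # xs) \<times> U. Phi (Gam p) = p"
    proof
      fix p assume p: "p \<in> FF S ((a, c) # xs) \<times> U"
      obtain g y where gy: "p = (g, y)" by (cases p)
      have g: "g \<in> invs S" "g a = c" and y: "y \<in> S" "y \<noteq> a" using p gy by (auto simp: FF_def U_def)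
      have "sw a y g a = y" using sw_facts(2)[OF g(1) ac(4) y(1)] y by auto
      moreover have "sw a c (sw a y g) = g"
        using sw_facts(6)[OF g(1) ac(4) y(1)] y g by (metis)
      ultimately show "Phi (Gam p) = p" using gy by (simp add: Phi_def Gam_def)
    qed
    show "Phi ` FF S xs \<subseteq> FF S ((a, c) # xs) \<times> U"
    proof
      fix q assume "q \<in> Phi ` FF S xs"
      then obtain f where f: "f \<in> FF S xs" "q = Phi f" by blast
      have fi: "f \<in> invs S" using f by (simp add: FF_def)
      have fa: "f a \<notin> elems xs" "f c \<notin> elems xs" using FF_closed[OF f(1)] ac by auto
      have "sw a c f \<in> FF S ((a, c) # xs)"
        unfolding FF_def
      proof (intro CollectI conjI ballI)
        show "sw a c f \<in> invs S" using sw_facts(1)[OF fi ac(4,5,1)] .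
        fix p assume p: "p \<in> set ((a, c) # xs)"
        show "sw a c f (fst p) = snd p"
        proof (cases "p = (a, c)")
          case True thus ?thesis using sw_facts(2)[OF fi ac(4,5,1)] by simp
        next
          case False
          hence p': "p \<in> set xs" using p by simp
          hence "fst p \<in> elems xs" by (force simp: elems_def)
          hence "fst p \<noteq> a" "fst p \<noteq> c" "fst p \<noteq> f a" "fst p \<noteq> f c" using ac fa by auto
          hence "sw a c f (fst p) = f (fst p)" using sw_facts(3)[OF fi ac(4,5,1)] by blast
          thus ?thesis using f(1) p' by (simp add: FF_def)
        qed
      qed
      moreover have "f a \<in> U" using fa invsD[OF fi ac(4)] by (simp add: U_def)
      ultimately show "q \<in> FF S ((a, c) # xs) \<times> U" using f by (simp add: Phi_def)
    qed
    show "Gam ` (FF S ((a, c) # xs) \<times> U) \<subseteq> FF S xs"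
    proof
      fix q assume "q \<in> Gam ` (FF S ((a, c) # xs) \<times> U)"
      then obtain g y where gy: "g \<in> FF S ((a, c) # xs)" "y \<in> U" "q = sw a y g" by (auto simp: Gam_def)
      have g: "g \<in> invs S" "g a = c" and y: "y \<in> S" "y \<noteq> a" "y \<notin> elems xs"
        using gy by (auto simp: FF_def U_def)
      have gx: "g \<in> FF S xs" using gy(1) by (auto simp: FF_def)
      have gy': "g y \<notin> elems xs" using FF_closed[OF gx y(1) y(3)] .
      show "q \<in> FF S xs" unfolding FF_def
      proof (intro CollectI conjI ballI)
        show "q \<in> invs S" using sw_facts(1)[OF g(1) ac(4) y(1)] y gy by auto
        fix p assume p: "p \<in> set xs"
        hence "fst p \<in> elems xs" by (force simp: elems_def)
        hence "fst p \<noteq> a" "fst p \<noteq> y" "fst p \<noteq> g a" "fst p \<noteq> g y" using ac y gy' g by auto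
        hence "q (fst p) = g (fst p)" using sw_facts(3)[OF g(1) ac(4) y(1)] y gy by auto
        thus "q (fst p) = snd p" using gx p by (simp add: FF_def)
      qed
    qed
  qed
  have "(\<Sum>f\<in>FF S xs. h (sw a c f)) = (\<Sum>f\<in>FF S xs. (\<lambda>q. h (fst q)) (Phi f))"
    by (simp add: Phi_def)
  also have "\<dots> = (\<Sum>q\<in>FF S ((a, c) # xs) \<times> U. h (fst q))"
    by (rule sum.reindex_bij_betw[OF bij])
  also have "\<dots> = (\<Sum>g\<in>FF S ((a, c) # xs). \<Sum>y\<in>U. h g)"
    by (subst sum.cartesian_product) (simp add: case_prod_beta)
  also have "\<dots> = real (card U) * (\<Sum>g\<in>FF S ((a, c) # xs). h g)"
    by (simp add: sum_distrib_left mult.commute)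
  finally show ?thesis by (simp add: U_def)
qed

primrec Th :: "('a \<times> 'a) list \<Rightarrow> ('a \<Rightarrow> 'a) \<Rightarrow> ('a \<Rightarrow> 'a)" where
  "Th [] f = f"
| "Th (p # xs) f = sw (fst p) (snd p) (Th xs f)"

lemma Th_FF: assumes "okl S xs" "f \<in> invs S" shows "Th xs f \<in> FF S xs"
  using assms
proof (induction xs)
  case Nil thus ?case by (simp add: FF_def)
next
  case (Cons p xs)
  obtain a c where p: "p = (a, c)" by (cases p)
  have okx: "okl S xs" and ac: "a \<noteq> c" "a \<notin> elems xs" "c \<notin> elems xs" "a \<in> S" "c \<in> S"
    using Cons.prems by (auto simp: okl_Cons p)
  have f: "Th xs f \<in> FF S xs" using Cons.IH okx Cons.prems by blast
  have fi: "Th xs f \<in> invs S" using f by (simp add: FF_def)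
  have fa: "Th xs f a \<notin> elems xs" "Th xs f c \<notin> elems xs" using FF_closed[OF f] ac by auto
  show ?case unfolding FF_def p Th.simps fst_conv snd_conv
  proof (intro CollectI conjI ballI)
    show "sw a c (Th xs f) \<in> invs S" using sw_facts(1)[OF fi ac(4,5,1)] .
    fix q assume q: "q \<in> set ((a, c) # xs)"
    show "sw a c (Th xs f) (fst q) = snd q"
    proof (cases "q = (a, c)")
      case True thus ?thesis using sw_facts(2)[OF fi ac(4,5,1)] by simp
    next
      case False
      hence q': "q \<in> set xs" using q by simp
      hence "fst q \<in> elems xs" by (force simp: elems_def)
      hence "fst q \<noteq> a" "fst q \<noteq> c" "fst q \<noteq> Th xs f a" "fst q \<noteq> Th xs f c" using ac fa by auto
      hence "sw a c (Th xs f) (fst q) = Th xs f (fst q)" using sw_facts(3)[OF fi ac(4,5,1)] by blast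
      thus ?thesis using f q' by (simp add: FF_def)
    qed
  qed
qed

lemma Th_count:
  fixes h :: "('a \<Rightarrow> 'a) \<Rightarrow> real"
  assumes S: "finite S" and ok: "okl S xs"
  shows "\<exists>k. \<forall>h :: ('a \<Rightarrow> 'a) \<Rightarrow> real. (\<Sum>f\<in>invs S. h (Th xs f)) = k * (\<Sum>g\<in>FF S xs. h g)"
  using ok
proof (induction xs)
  case Nil
  have "FF S [] = invs S" by (simp add: FF_def)
  thus ?case by (intro exI[of _ 1]) simp
next
  case (Cons p xs)
  obtain a c where p: "p = (a, c)" by (cases p)
  have okx: "okl S xs" using Cons.prems by (simp add: okl_Cons)
  obtain k where k: "\<And>h :: ('a \<Rightarrow> 'a) \<Rightarrow> real. (\<Sum>f\<in>invs S. h (Th xs f)) = k * (\<Sum>g\<in>FF S xs. h g)"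
    using Cons.IH okx by blast
  show ?case
  proof (intro exI allI)
    fix h :: "('a \<Rightarrow> 'a) \<Rightarrow> real"
    have "(\<Sum>f\<in>invs S. h (Th (p # xs) f)) = (\<Sum>f\<in>invs S. (\<lambda>g. h (sw a c g)) (Th xs f))"
      by (simp add: p)
    also have "\<dots> = k * (\<Sum>g\<in>FF S xs. h (sw a c g))" by (rule k)
    also have "\<dots> = k * (real (card (S - elems xs - {a})) * (\<Sum>g\<in>FF S (p # xs). h g))"
      using step_count[OF S Cons.prems[unfolded p]] p by simp
    finally show "(\<Sum>f\<in>invs S. h (Th (p # xs) f)) = (k * real (card (S - elems xs - {a}))) * (\<Sum>g\<in>FF S (p # xs). h g)"
      by simp
  qed
qed

lemma Th_diff1:
  assumes ok: "okl S xs" and f: "f \<in> invs S" and x: "Th xs f x \<noteq> f x"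
  shows "x \<in> elems xs \<or> f x \<in> elems xs"
  using ok x
proof (induction xs arbitrary: x)
  case Nil thus ?case by simp
next
  case (Cons p xs)
  obtain a c where p: "p = (a, c)" by (cases p)
  have okx: "okl S xs" and ac: "a \<noteq> c" "a \<in> S" "c \<in> S"
    using Cons.prems by (auto simp: okl_Cons p)
  define g where "g = Th xs f"
  have gi: "g \<in> invs S" using Th_FF[OF okx f] by (simp add: g_def FF_def)
  show ?case
  proof (cases "g x = f x")
    case False thus ?thesis using Cons.IH[OF okx] by (auto simp: g_def)
  next
    case True
    hence ne: "sw a c g x \<noteq> g x" using Cons.prems by (simp add: p g_def)
    hence "x = a \<or> x = c \<or> x = g a \<or> x = g c" using sw_facts(3)[OF gi ac(2,3,1)] by blast
    moreover have "g (g a) = a" "g (g c) = c" using invsD[OF gi] ac by auto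
    ultimately show ?thesis using True p by auto
  qed
qed

lemma Th_diff2:
  assumes ok: "okl S xs" and f: "f \<in> invs S"
  shows "\<exists>R. finite R \<and> card R \<le> length xs \<and>
     (\<forall>x. Th xs f x \<noteq> f x \<longrightarrow> x \<in> elems xs \<or> x \<in> R \<or> Th xs f x \<in> R)"
  using ok
proof (induction xs)
  case Nil thus ?case by (intro exI[of _ "{}"]) simp
next
  case (Cons p xs)
  obtain a c where p: "p = (a, c)" by (cases p)
  have okx: "okl S xs" and ac: "a \<noteq> c" "a \<in> S" "c \<in> S"
    using Cons.prems by (auto simp: okl_Cons p)
  define g where "g = Th xs f"
  have gi: "g \<in> invs S" using Th_FF[OF okx f] by (simp add: g_def FF_def)
  obtain R where R: "finite R" "card R \<le> length xs"
    "\<And>x. g x \<noteq> f x \<Longrightarrow> x \<in> elems xs \<or> x \<in> R \<or> g x \<in> R"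
    using Cons.IH[OF okx] by (auto simp: g_def)
  show ?case
  proof (intro exI conjI allI impI)
    show "finite (insert (g a) R)" using R by simp
    show "card (insert (g a) R) \<le> length (p # xs)" using R by (simp add: card_insert_if)
    fix x assume x: "Th (p # xs) f x \<noteq> f x"
    have e: "Th (p # xs) f = sw a c g" by (simp add: p g_def)
    show "x \<in> elems (p # xs) \<or> x \<in> insert (g a) R \<or> Th (p # xs) f x \<in> insert (g a) R"
    proof (cases "sw a c g x = g x")
      case True thus ?thesis using R(3)[of x] x e by auto
    next
      case False
      hence "x = a \<or> x = c \<or> x = g a \<or> x = g c" using sw_facts(3)[OF gi ac(2,3,1)] by blast
      moreover have "g a \<noteq> c" using False by (auto simp: sw_def)
      ultimately show ?thesis using sw_facts(5)[OF gi ac(2,3,1)] e p by auto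
    qed
  qed
qed




lemma card_set_mset_le: "card (set_mset M) \<le> size M"
  by (induction M) (auto simp: card_insert_if)

lemma eop_eq: assumes "x \<noteq> y" shows "edge_of_pair {x, y} = Upair (fst x) (fst y)"
proof -
  have "(\<exists>a b. {x, y} = {a, b} \<and> a \<noteq> b \<and> u = Upair (fst a) (fst b)) \<longleftrightarrow> u = Upair (fst x) (fst y)" for u
  proof
    assume "\<exists>a b. {x, y} = {a, b} \<and> a \<noteq> b \<and> u = Upair (fst a) (fst b)"
    then obtain a b where "{x, y} = {a, b}" "u = Upair (fst a) (fst b)" by blast
    thus "u = Upair (fst x) (fst y)" by (auto simp: doubleton_eq_iff)
  next
    assume "u = Upair (fst x) (fst y)" thus "\<exists>a b. {x, y} = {a, b} \<and> a \<noteq> b \<and> u = Upair (fst a) (fst b)"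
      using assms by blast
  qed
  thus ?thesis unfolding edge_of_pair_def by simp
qed

lemma card_comp_le:
  assumes wf: "wf_mgraph G"
  shows "card (comp_vertices G v) \<le> num_edges (component G v) + 1"
proof -
  let ?adj = "adjacent G"
  define C where "C = comp_vertices G v"
  define E where "E = snd (component G v)"
  have finC: "finite C" using wf by (auto simp: C_def comp_vertices_def wf_mgraph_def)
  have adjV: "u \<in> fst G" "w \<in> fst G" if "?adj u w" for u w
    using wf that by (auto simp: adjacent_def wf_mgraph_def)
  define dist where "dist u = (LEAST k. (?adj ^^ k) v u)" for u
  define pr where "pr u = (SOME x. (?adj ^^ (dist u - 1)) v x \<and> ?adj x u)" for u
  have key: "dist u \<ge> 1 \<and> (?adj ^^ (dist u - 1)) v (pr u) \<and> ?adj (pr u) u" if u: "u \<in> C - {v}" for u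
  proof -
    have "?adj\<^sup>*\<^sup>* v u" using u by (auto simp: C_def comp_vertices_def)
    then obtain k where k: "(?adj ^^ k) v u" using rtranclp_power by metis
    have d: "(?adj ^^ dist u) v u" unfolding dist_def by (rule LeastI[of _ k]) (rule k)
    have "dist u \<noteq> 0"
    proof
      assume "dist u = 0" with d have "v = u" by simp
      thus False using u by simp
    qed
    then obtain m where m: "dist u = Suc m" by (cases "dist u") auto
    have "\<exists>x. (?adj ^^ (dist u - 1)) v x \<and> ?adj x u" using d m by (auto elim: relpowp_Suc_E)
    hence "(?adj ^^ (dist u - 1)) v (pr u) \<and> ?adj (pr u) u" unfolding pr_def by (rule someI_ex)
    thus ?thesis using m by simp
  qed
  define ed where "ed u = Upair (pr u) u" for u
  have inj: "inj_on ed (C - {v})"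
  proof (rule inj_onI)
    fix u u' assume u: "u \<in> C - {v}" and u': "u' \<in> C - {v}" and e: "ed u = ed u'"
    show "u = u'"
    proof (rule ccontr)
      assume ne: "u \<noteq> u'"
      hence x: "pr u = u'" "pr u' = u" using e by (auto simp: ed_def)
      have r1: "(?adj ^^ (dist u - 1)) v u'" using key[OF u] x by simp
      have r2: "(?adj ^^ (dist u' - 1)) v u" using key[OF u'] x by simp
      have "dist u' \<le> dist u - 1" unfolding dist_def[of u'] by (rule Least_le) (rule r1)
      moreover have "dist u \<le> dist u' - 1" unfolding dist_def[of u] by (rule Least_le) (rule r2)
      ultimately show False using key[OF u] key[OF u'] by linarith
    qed
  qed
  have sub: "ed ` (C - {v}) \<subseteq> set_mset E"
  proof
    fix e assume "e \<in> ed ` (C - {v})"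
    then obtain u where u: "u \<in> C - {v}" "e = ed u" by blast
    have a: "?adj (pr u) u" and r: "(?adj ^^ (dist u - 1)) v (pr u)" using key[OF u(1)] by auto
    have "pr u \<in> C" using adjV[OF a] relpowp_imp_rtranclp[OF r] by (auto simp: C_def comp_vertices_def)
    thus "e \<in> set_mset E" using a u by (auto simp: E_def ed_def component_def adjacent_def C_def)
  qed
  have "card (C - {v}) \<le> card (set_mset E)"
    using card_inj_on_le[OF inj sub] by simp
  also have "\<dots> \<le> size E" by (rule card_set_mset_le)
  finally have "card (C - {v}) \<le> num_edges (component G v)" by (simp add: E_def num_edges_def)
  moreover have "card C \<le> card (C - {v}) + 1"
  proof (cases "v \<in> C")
    case True
    hence "card C > 0" using finC card_gt_0_iff by blast
    thus ?thesis using True finC by (simp add: card_Diff_singleton)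
  next
    case False thus ?thesis by simp
  qed
  ultimately show ?thesis unfolding C_def by linarith
qed

lemma wf_component: "wf_mgraph G \<Longrightarrow> wf_mgraph (component G v)"
  by (auto simp: wf_mgraph_def component_def comp_vertices_def)

lemma comp_in_fst: "comp_vertices G v \<subseteq> fst G" by (auto simp: comp_vertices_def)




locale cm =
  fixes n :: nat and S :: "(nat \<times> nat) set"
  assumes finS: "finite S" and vS: "\<And>x. x \<in> S \<Longrightarrow> fst x < n"
begin

definition Gr :: "(nat \<times> nat \<Rightarrow> nat \<times> nat) \<Rightarrow> mgraph" where
  "Gr f = config_graph n (pairs_of S f)"

definition comp :: "(nat \<times> nat \<Rightarrow> nat \<times> nat) \<Rightarrow> nat \<Rightarrow> nat set" where
  "comp f v = comp_vertices (Gr f) v"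

lemma fst_Gr[simp]: "fst (Gr f) = {..<n}" by (simp add: Gr_def config_graph_def)

lemma finite_pairs: "finite (pairs_of S f)" using finS by (simp add: pairs_of_def)

lemma eop_pair: assumes "f \<in> invs S" "x \<in> S" shows "edge_of_pair {x, f x} = Upair (fst x) (fst (f x))"
  using eop_eq invsD[OF assms] by metis

lemma edges_Gr: assumes f: "f \<in> invs S"
  shows "set_mset (snd (Gr f)) = (\<lambda>x. Upair (fst x) (fst (f x))) ` S"
proof -
  have "set_mset (snd (Gr f)) = edge_of_pair ` pairs_of S f"
    using finite_pairs by (simp add: Gr_def config_graph_def)
  also have "\<dots> = (\<lambda>x. Upair (fst x) (fst (f x))) ` S"
    using eop_pair[OF f] by (force simp: pairs_of_def image_image)
  finally show ?thesis .
qed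

lemma adj_Gr: assumes f: "f \<in> invs S"
  shows "adjacent (Gr f) u w \<longleftrightarrow> (\<exists>x\<in>S. fst x = u \<and> fst (f x) = w)"
proof
  assume "adjacent (Gr f) u w"
  then obtain x where x: "x \<in> S" "Upair u w = Upair (fst x) (fst (f x))"
    using edges_Gr[OF f] by (auto simp: adjacent_def)
  show "\<exists>x\<in>S. fst x = u \<and> fst (f x) = w"
  proof (cases "fst x = u \<and> fst (f x) = w")
    case True thus ?thesis using x by blast
  next
    case False
    hence "fst (f x) = u \<and> fst (f (f x)) = w" using x invsD[OF f x(1)] by auto
    thus ?thesis using invsD[OF f x(1)] by blast
  qed
next
  assume "\<exists>x\<in>S. fst x = u \<and> fst (f x) = w"
  thus "adjacent (Gr f) u w" using edges_Gr[OF f] by (force simp: adjacent_def)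
qed

lemma wf_Gr: assumes f: "f \<in> invs S" shows "wf_mgraph (Gr f)"
  using edges_Gr[OF f] vS invsD[OF f] by (auto simp: wf_mgraph_def)

lemma adj_sym: assumes f: "f \<in> invs S" shows "adjacent (Gr f) u w \<Longrightarrow> adjacent (Gr f) w u"
  using adj_Gr[OF f] invsD[OF f] by metis

lemma rtr_sym: assumes f: "f \<in> invs S" shows "(adjacent (Gr f))\<^sup>*\<^sup>* u w \<Longrightarrow> (adjacent (Gr f))\<^sup>*\<^sup>* w u"
proof (induction rule: rtranclp_induct)
  case base thus ?case by simp
next
  case (step y z) thus ?case using adj_sym[OF f step(2)] by (meson converse_rtranclp_into_rtranclp)
qed

lemma comp_sym: assumes f: "f \<in> invs S" and u: "u \<in> comp f w" and w: "w < n"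
  shows "w \<in> comp f u"
  using u w rtr_sym[OF f] by (auto simp: comp_def comp_vertices_def)

lemma comp_eq: assumes f: "f \<in> invs S" and u: "u \<in> comp f w" and w: "w < n"
  shows "comp f u = comp f w" "component (Gr f) u = component (Gr f) w"
proof -
  have r: "(adjacent (Gr f))\<^sup>*\<^sup>* w u" using u by (auto simp: comp_def comp_vertices_def)
  have r': "(adjacent (Gr f))\<^sup>*\<^sup>* u w" using rtr_sym[OF f r] .
  show "comp f u = comp f w" using r r' by (auto simp: comp_def comp_vertices_def intro: rtranclp_trans)
  thus "component (Gr f) u = component (Gr f) w" by (simp add: component_def comp_def)
qed

lemma comp_closed: assumes f: "f \<in> invs S" and x: "x \<in> S" and c: "fst x \<in> comp f w"
  shows "fst (f x) \<in> comp f w"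
proof -
  have "adjacent (Gr f) (fst x) (fst (f x))" using adj_Gr[OF f] x by blast
  moreover have "fst (f x) < n" using vS invsD[OF f x] by blast
  ultimately show ?thesis using c by (auto simp: comp_def comp_vertices_def intro: rtranclp.rtrancl_into_rtrancl)
qed

lemma comp_lt: "u \<in> comp f w \<Longrightarrow> u < n" by (auto simp: comp_def comp_vertices_def)

lemma comp_agree:
  assumes f: "f \<in> invs S" and g: "g \<in> invs S"
    and agree: "\<And>x. x \<in> S \<Longrightarrow> fst x \<in> comp f w \<Longrightarrow> g x = f x"
  shows "comp g w = comp f w" "component (Gr g) w = component (Gr f) w"
proof -
  have 1: "(adjacent (Gr g))\<^sup>*\<^sup>* w u" if "(adjacent (Gr f))\<^sup>*\<^sup>* w u" for u
    using that
  proof (induction rule: rtranclp_induct)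
    case base thus ?case by simp
  next
    case (step y z)
    obtain x where x: "x \<in> S" "fst x = y" "fst (f x) = z" using step(2) adj_Gr[OF f] by blast
    have "y \<in> comp f w" using step(1) x vS[OF x(1)] by (auto simp: comp_def comp_vertices_def)
    hence "g x = f x" using agree x by blast
    hence "adjacent (Gr g) y z" using adj_Gr[OF g] x by metis
    thus ?case using step(3) by (meson rtranclp.rtrancl_into_rtrancl)
  qed
  have 2: "(adjacent (Gr f))\<^sup>*\<^sup>* w u" if "(adjacent (Gr g))\<^sup>*\<^sup>* w u" for u
    using that
  proof (induction rule: rtranclp_induct)
    case base thus ?case by simp
  next
    case (step y z)
    obtain x where x: "x \<in> S" "fst x = y" "fst (g x) = z" using step(2) adj_Gr[OF g] by blast
    have "y \<in> comp f w" using step(3) x vS[OF x(1)] by (auto simp: comp_def comp_vertices_def)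
    hence "g x = f x" using agree x by blast
    hence "adjacent (Gr f) y z" using adj_Gr[OF f] x by metis
    thus ?case using step(3) by (meson rtranclp.rtrancl_into_rtrancl)
  qed
  show cc: "comp g w = comp f w" using 1 2 by (auto simp: comp_def comp_vertices_def)
  define C where "C = comp f w"
  have setseq: "{e \<in> pairs_of S g. set_uprod (edge_of_pair e) \<subseteq> C} = {e \<in> pairs_of S f. set_uprod (edge_of_pair e) \<subseteq> C}"
  proof -
    have A: "{e \<in> pairs_of S h. set_uprod (edge_of_pair e) \<subseteq> C} = (\<lambda>x. {x, h x}) ` {x\<in>S. fst x \<in> C \<and> fst (h x) \<in> C}"
      if h: "h \<in> invs S" for h
      using eop_pair[OF h] by (auto simp: pairs_of_def)
    have B: "{x\<in>S. fst x \<in> C \<and> fst (g x) \<in> C} = {x\<in>S. fst x \<in> C \<and> fst (f x) \<in> C}"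
      using agree by (auto simp: C_def)
    have "(\<lambda>x. {x, g x}) ` {x\<in>S. fst x \<in> C \<and> fst (f x) \<in> C} = (\<lambda>x. {x, f x}) ` {x\<in>S. fst x \<in> C \<and> fst (f x) \<in> C}"
      using agree by (auto simp: C_def)
    thus ?thesis using A[OF f] A[OF g] B by simp
  qed
  show "component (Gr g) w = component (Gr f) w"
    unfolding component_def comp_def[symmetric] cc
    by (simp add: Gr_def config_graph_def filter_mset_image_mset finite_pairs setseq[unfolded C_def])
qed

end



lemma exists_list:
  assumes "finite X" "X \<subseteq> S" "f \<in> invs S" "\<And>x. x \<in> X \<Longrightarrow> f x \<in> X"
  shows "\<exists>xs. okl S xs \<and> elems xs = X \<and> (\<forall>p\<in>set xs. f (fst p) = snd p)"
  using assms
proof (induction "card X" arbitrary: X rule: less_induct)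
  case less
  show ?case
  proof (cases "X = {}")
    case True thus ?thesis by (intro exI[of _ "[]"]) (simp add: okl_def elems_def)
  next
    case False
    then obtain a where a: "a \<in> X" by blast
    have aS: "a \<in> S" using a less.prems by auto
    have fa: "f a \<in> X" "f a \<noteq> a" "f (f a) = a" using less.prems(4)[OF a] invsD[OF less.prems(3) aS] by auto
    define X' where "X' = X - {a, f a}"
    have cl: "f x \<in> X'" if "x \<in> X'" for x
    proof -
      have x: "x \<in> X" "x \<noteq> a" "x \<noteq> f a" using that by (auto simp: X'_def)
      have xS: "x \<in> S" using x less.prems by auto
      have ffx: "f (f x) = x" using invsD[OF less.prems(3) xS] by simp
      have "f x \<noteq> f a"
      proof
        assume "f x = f a" hence "f (f x) = f (f a)" by simp
        thus False using ffx fa x by simp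
      qed
      moreover have "f x \<noteq> a"
      proof
        assume "f x = a" hence "f (f x) = f a" by simp
        thus False using ffx x by simp
      qed
      ultimately show ?thesis using less.prems(4)[OF x(1)] by (auto simp: X'_def)
    qed
    have "card X' < card X" unfolding X'_def using a less.prems(1) by (intro psubset_card_mono) auto
    have fX': "finite X'" "X' \<subseteq> S" using less.prems by (auto simp: X'_def)
    obtain xs where xs: "okl S xs" "elems xs = X'" "\<forall>p\<in>set xs. f (fst p) = snd p"
      using less.hyps[OF \<open>card X' < card X\<close> fX' less.prems(3) cl] by blast
    show ?thesis
    proof (intro exI[of _ "(a, f a) # xs"] conjI)
      show "okl S ((a, f a) # xs)" using xs fa aS less.prems by (auto simp: okl_Cons X'_def)
      show "elems ((a, f a) # xs) = X" using xs a fa by (auto simp: X'_def)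
      show "\<forall>p\<in>set ((a, f a) # xs). f (fst p) = snd p" using xs by auto
    qed
  qed
qed

lemma okl_inj:
  assumes "okl S xs"
  shows "distinct xs \<and> inj_on (\<lambda>p. {fst p, snd p}) (set xs)"
  using assms
proof (induction xs)
  case Nil thus ?case by simp
next
  case (Cons p xs)
  have ok: "okl S xs" "fst p \<notin> elems xs" "snd p \<notin> elems xs" "fst p \<noteq> snd p"
    using Cons.prems by (auto simp: okl_Cons)
  have nin: "p \<notin> set xs" using ok(2) by (force simp: elems_def)
  have ne: "{fst p, snd p} \<noteq> {fst q, snd q}" if "q \<in> set xs" for q
  proof
    assume "{fst p, snd p} = {fst q, snd q}"
    hence "fst p \<in> {fst q, snd q}" by auto
    thus False using ok(2) that by (force simp: elems_def)
  qed
  have ne2: "{fst q, snd q} \<noteq> {fst p, snd p}" if "q \<in> set xs" for q using ne[OF that] by metis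
  show ?case using ne2 Cons.IH[OF ok(1)] nin by (auto simp: inj_on_def)
qed

lemma FF_char:
  assumes ok: "okl S xs" and f: "f \<in> invs S" and X: "elems xs = X" and p: "\<forall>p\<in>set xs. f (fst p) = snd p"
  shows "FF S xs = {g \<in> invs S. \<forall>x\<in>X. g x = f x}"
proof
  show "FF S xs \<subseteq> {g \<in> invs S. \<forall>x\<in>X. g x = f x}"
  proof
    fix g assume g: "g \<in> FF S xs"
    have gi: "g \<in> invs S" using g by (simp add: FF_def)
    have "\<forall>x\<in>X. g x = f x"
    proof
      fix x assume x: "x \<in> X"
      obtain q where q: "q \<in> set xs" "x = fst q \<or> x = snd q" using x X by (auto simp: elems_def)
      have qS: "fst q \<in> S" "snd q \<in> S" using q ok by (force simp: okl_def elems_def)+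
      have gq: "g (fst q) = snd q" "f (fst q) = snd q" using g q p by (auto simp: FF_def)
      show "g x = f x" using q gq invsD[OF gi qS(1)] invsD[OF f qS(1)] by auto
    qed
    thus "g \<in> {g \<in> invs S. \<forall>x\<in>X. g x = f x}" using gi by blast
  qed
next
  show "{g \<in> invs S. \<forall>x\<in>X. g x = f x} \<subseteq> FF S xs"
  proof safe
    fix g assume g: "g \<in> invs S" "\<forall>x\<in>X. g x = f x"
    show "g \<in> FF S xs" unfolding FF_def
    proof (intro CollectI conjI ballI)
      show "g \<in> invs S" by (rule g(1))
      fix q assume q: "q \<in> set xs"
      hence "fst q \<in> X" using X by (force simp: elems_def)
      thus "g (fst q) = snd q" using g p q by auto
    qed
  qed
qed

context cm
begin

definition SA :: "(nat \<times> nat \<Rightarrow> nat \<times> nat) \<Rightarrow> nat \<Rightarrow> (nat \<times> nat) set" where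
  "SA f v = {x \<in> S. fst x \<in> comp f v}"

definition fib :: "nat \<Rightarrow> (nat \<times> nat \<Rightarrow> nat \<times> nat) \<Rightarrow> (nat \<times> nat \<Rightarrow> nat \<times> nat) set" where
  "fib v f = {g \<in> invs S. \<forall>x\<in>SA f v. g x = f x}"

lemma fib_self: "f \<in> invs S \<Longrightarrow> f \<in> fib v f" by (simp add: fib_def)

lemma fib_comp: assumes f: "f \<in> invs S" and g: "g \<in> fib v f"
  shows "comp g v = comp f v" "component (Gr g) v = component (Gr f) v" "fib v g = fib v f"
proof -
  have gi: "g \<in> invs S" using g by (simp add: fib_def)
  have ag: "\<And>x. x \<in> S \<Longrightarrow> fst x \<in> comp f v \<Longrightarrow> g x = f x" using g by (auto simp: fib_def SA_def)
  show c: "comp g v = comp f v" using comp_agree[OF f gi ag] by blast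
  show "component (Gr g) v = component (Gr f) v" using comp_agree[OF f gi ag] by blast
  have sa: "SA g v = SA f v" using c by (simp add: SA_def)
  have gf: "\<forall>x\<in>SA f v. g x = f x" using g by (simp add: fib_def)
  have "(\<forall>x\<in>SA f v. h x = g x) \<longleftrightarrow> (\<forall>x\<in>SA f v. h x = f x)" for h using gf by force
  thus "fib v g = fib v f" unfolding fib_def sa by blast
qed

lemma fib_sym: assumes f: "f \<in> invs S" and g: "g \<in> invs S"
  shows "g \<in> fib v f \<longleftrightarrow> f \<in> fib v g"
proof
  assume a: "g \<in> fib v f"
  have "fib v g = fib v f" by (rule fib_comp(3)[OF f a])
  thus "f \<in> fib v g" using fib_self[OF f] by blast
next
  assume a: "f \<in> fib v g"
  have "fib v f = fib v g" by (rule fib_comp(3)[OF g a])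
  thus "g \<in> fib v f" using fib_self[OF g] by blast
qed

lemma finite_fib: "finite (fib v f)"
  by (rule finite_subset[OF _ finite_invs[OF finS]]) (auto simp: fib_def)

lemma SA_closed: assumes f: "f \<in> invs S" and x: "x \<in> SA f v" shows "f x \<in> SA f v"
proof -
  have x': "x \<in> S" "fst x \<in> comp f v" using x by (auto simp: SA_def)
  show ?thesis using comp_closed[OF f x'] invsD(1)[OF f x'(1)] by (simp add: SA_def)
qed

lemma fib_list:
  assumes f: "f \<in> invs S"
  shows "\<exists>xs. okl S xs \<and> elems xs = SA f v \<and> FF S xs = fib v f \<and>
           num_edges (component (Gr f) v) = length xs"
proof -
  have fin: "finite (SA f v)" using finS by (simp add: SA_def)
  obtain xs where xs: "okl S xs" "elems xs = SA f v" "\<forall>p\<in>set xs. f (fst p) = snd p"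
    using exists_list[OF fin _ f SA_closed[OF f]] by (auto simp: SA_def)
  have FFe: "FF S xs = fib v f" using FF_char[OF xs(1) f xs(2,3)] by (simp add: fib_def)
  define C where "C = comp f v"
  have eq: "{e \<in> pairs_of S f. set_uprod (edge_of_pair e) \<subseteq> C} = (\<lambda>p. {fst p, snd p}) ` set xs"
  proof
    show "{e \<in> pairs_of S f. set_uprod (edge_of_pair e) \<subseteq> C} \<subseteq> (\<lambda>p. {fst p, snd p}) ` set xs"
    proof
      fix e assume "e \<in> {e \<in> pairs_of S f. set_uprod (edge_of_pair e) \<subseteq> C}"
      then obtain x where x: "x \<in> S" "e = {x, f x}" "fst x \<in> C"
        using eop_pair[OF f] by (auto simp: pairs_of_def)
      hence "x \<in> elems xs" using xs(2) by (simp add: SA_def C_def)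
      then obtain q where q: "q \<in> set xs" "x = fst q \<or> x = snd q" by (auto simp: elems_def)
      have qS: "fst q \<in> S" using q xs(1) by (force simp: okl_def elems_def)
      have "f (fst q) = snd q" using xs(3) q by auto
      hence "e = {fst q, snd q}" using q x invsD[OF f qS] by auto
      thus "e \<in> (\<lambda>p. {fst p, snd p}) ` set xs" using q by auto
    qed
  next
    show "(\<lambda>p. {fst p, snd p}) ` set xs \<subseteq> {e \<in> pairs_of S f. set_uprod (edge_of_pair e) \<subseteq> C}"
    proof
      fix e assume "e \<in> (\<lambda>p. {fst p, snd p}) ` set xs"
      then obtain q where q: "q \<in> set xs" "e = {fst q, snd q}" by auto
      have qA: "fst q \<in> SA f v" "snd q \<in> SA f v" using q xs(2) by (force simp: elems_def)+
      have fq: "f (fst q) = snd q" using xs(3) q by auto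
      have qS: "fst q \<in> S" using qA by (simp add: SA_def)
      have "e \<in> pairs_of S f" using q fq qS by (auto simp: pairs_of_def)
      moreover have "set_uprod (edge_of_pair e) \<subseteq> C"
        using eop_pair[OF f qS] fq q qA by (auto simp: SA_def C_def)
      ultimately show "e \<in> {e \<in> pairs_of S f. set_uprod (edge_of_pair e) \<subseteq> C}" by blast
    qed
  qed
  have "snd (component (Gr f) v) = image_mset edge_of_pair (mset_set {e \<in> pairs_of S f. set_uprod (edge_of_pair e) \<subseteq> C})"
    by (simp add: component_def comp_def C_def Gr_def config_graph_def
        filter_mset_image_mset finite_pairs)
  hence "num_edges (component (Gr f) v) = card {e \<in> pairs_of S f. set_uprod (edge_of_pair e) \<subseteq> C}"
    by (simp add: num_edges_def)
  also have "\<dots> = length xs" using eq okl_inj[OF xs(1)] by (simp add: card_image distinct_card)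
  finally show ?thesis using xs FFe by blast
qed

end



locale cm2 = cm +
  fixes \<psi> :: "mgraph \<Rightarrow> real" and K :: nat and M :: real
  assumes Kz: "\<And>H. wf_mgraph H \<Longrightarrow> num_edges H \<ge> K \<Longrightarrow> \<psi> H = 0"
    and Mb: "\<And>H. wf_mgraph H \<Longrightarrow> \<bar>\<psi> H\<bar> \<le> M"
begin

definition phi :: "(nat \<times> nat \<Rightarrow> nat \<times> nat) \<Rightarrow> nat \<Rightarrow> real" where
  "phi f w = \<psi> (component (Gr f) w)"

definition PsiF :: "(nat \<times> nat \<Rightarrow> nat \<times> nat) \<Rightarrow> real" where
  "PsiF f = (\<Sum>w<n. phi f w)"

lemma M_nonneg: "M \<ge> 0"
proof -
  have "wf_mgraph ({}, {#})" by (simp add: wf_mgraph_def)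
  from Mb[OF this] show ?thesis by linarith
qed

lemma phi_bound: "f \<in> invs S \<Longrightarrow> \<bar>phi f w\<bar> \<le> M"
  unfolding phi_def by (rule Mb[OF wf_component[OF wf_Gr]])

lemma comp_small:
  assumes f: "f \<in> invs S" and nz: "phi f b \<noteq> 0"
  shows "card (comp f b) \<le> K" "num_edges (component (Gr f) b) < K"
proof -
  have wf: "wf_mgraph (component (Gr f) b)" by (rule wf_component[OF wf_Gr[OF f]])
  show ne: "num_edges (component (Gr f) b) < K"
    using Kz[OF wf] nz unfolding phi_def by (meson not_le)
  show "card (comp f b) \<le> K" using card_comp_le[OF wf_Gr[OF f], of b] ne
    unfolding comp_def by linarith
qed

lemma local_one:
  assumes f: "f \<in> invs S"
  shows "(\<Sum>w<n. if b \<in> comp f w then \<bar>phi f w\<bar> else 0) \<le> real K * M"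
proof (cases "b < n")
  case False
  hence "b \<notin> comp f w" for w using comp_lt by blast
  thus ?thesis using M_nonneg by simp
next
  case True
  have set: "{w \<in> {..<n}. b \<in> comp f w} = comp f b"
  proof
    show "{w \<in> {..<n}. b \<in> comp f w} \<subseteq> comp f b" using comp_sym[OF f] by auto
    show "comp f b \<subseteq> {w \<in> {..<n}. b \<in> comp f w}" using comp_sym[OF f _ True] comp_lt by auto
  qed
  have "(\<Sum>w<n. if b \<in> comp f w then \<bar>phi f w\<bar> else 0) = (\<Sum>w\<in>comp f b. \<bar>phi f w\<bar>)"
    by (simp add: sum.inter_filter[symmetric] set[symmetric])
  also have "\<dots> = (\<Sum>w\<in>comp f b. \<bar>phi f b\<bar>)"
    using comp_eq(2)[OF f _ True] by (simp add: phi_def)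
  also have "\<dots> = real (card (comp f b)) * \<bar>phi f b\<bar>" by simp
  also have "\<dots> \<le> real K * M"
  proof (cases "phi f b = 0")
    case True thus ?thesis using M_nonneg by simp
  next
    case False
    have "real (card (comp f b)) \<le> real K" using comp_small(1)[OF f False] by simp
    thus ?thesis using phi_bound[OF f, of b] by (intro mult_mono) auto
  qed
  finally show ?thesis .
qed

lemma local_sum:
  assumes f: "f \<in> invs S" and B: "finite B" "card B \<le> K"
  shows "(\<Sum>w<n. if \<exists>b\<in>B. b \<in> comp f w then \<bar>phi f w\<bar> else 0) \<le> real K * real K * M"
proof -
  have "(\<Sum>w<n. if \<exists>b\<in>B. b \<in> comp f w then \<bar>phi f w\<bar> else 0)
      \<le> (\<Sum>w<n. \<Sum>b\<in>B. if b \<in> comp f w then \<bar>phi f w\<bar> else 0)"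
  proof (rule sum_mono)
    fix w
    show "(if \<exists>b\<in>B. b \<in> comp f w then \<bar>phi f w\<bar> else 0) \<le> (\<Sum>b\<in>B. if b \<in> comp f w then \<bar>phi f w\<bar> else 0)"
    proof (cases "\<exists>b\<in>B. b \<in> comp f w")
      case True
      then obtain b where b: "b \<in> B" "b \<in> comp f w" by blast
      have "(if b \<in> comp f w then \<bar>phi f w\<bar> else 0) \<le> (\<Sum>b\<in>B. if b \<in> comp f w then \<bar>phi f w\<bar> else 0)"
        by (rule member_le_sum[OF b(1)]) (auto simp: B)
      thus ?thesis using b True by simp
    next
      case False thus ?thesis by (simp add: sum_nonneg)
    qed
  qed
  also have "\<dots> = (\<Sum>b\<in>B. \<Sum>w<n. if b \<in> comp f w then \<bar>phi f w\<bar> else 0)" by (rule sum.swap)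
  also have "\<dots> \<le> (\<Sum>b\<in>B. real K * M)" by (rule sum_mono) (rule local_one[OF f])
  also have "\<dots> = real (card B) * (real K * M)" by simp
  also have "\<dots> \<le> real K * (real K * M)" using B(2) M_nonneg by (intro mult_right_mono) auto
  finally show ?thesis by simp
qed

lemma pointwise:
  assumes f0: "f0 \<in> invs S" and v: "v < n" and nz: "phi f0 v \<noteq> 0"
    and xs: "okl S xs" "elems xs = SA f0 v" "FF S xs = fib v f0"
      "num_edges (component (Gr f0) v) = length xs"
    and f: "f \<in> invs S"
  shows "\<bar>PsiF f - PsiF (Th xs f)\<bar> \<le> 2 * real K * real K * M"
proof -
  define g where "g = Th xs f"
  have gF: "g \<in> fib v f0" using Th_FF[OF xs(1) f] xs(3) by (simp add: g_def)
  have gi: "g \<in> invs S" using gF by (simp add: fib_def)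
  have cg: "comp g v = comp f0 v" using fib_comp(1)[OF f0 gF] .
  define A where "A = comp f0 v"
  have lenK: "length xs < K" using comp_small(2)[OF f0 nz] xs(4) by simp
  have cardA: "card A \<le> K" using comp_small(1)[OF f0 nz] by (simp add: A_def)
  have finA: "finite A" using comp_in_fst[of "Gr f0" v] by (auto simp: A_def comp_def intro: finite_subset)
  obtain R where R: "finite R" "card R \<le> length xs"
    "\<And>x. Th xs f x \<noteq> f x \<Longrightarrow> x \<in> elems xs \<or> x \<in> R \<or> Th xs f x \<in> R"
    using Th_diff2[OF xs(1) f] by blast
  define B2 where "B2 = insert v (fst ` R)"
  have finB2: "finite B2" using R by (simp add: B2_def)
  have cardB2: "card B2 \<le> K"
  proof -
    have "card B2 \<le> Suc (card (fst ` R))" unfolding B2_def using R(1) by (simp add: card_insert_le_m1 card_insert_if)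
    also have "\<dots> \<le> Suc (card R)" using card_image_le[OF R(1)] by simp
    finally show ?thesis using R(2) lenK by linarith
  qed
  have el: "x \<in> elems xs \<longleftrightarrow> x \<in> S \<and> fst x \<in> A" for x using xs(2) by (simp add: SA_def A_def)
  have termw: "\<bar>phi f w - phi g w\<bar> \<le> (if \<exists>b\<in>A. b \<in> comp f w then \<bar>phi f w\<bar> else 0)
      + (if \<exists>b\<in>B2. b \<in> comp g w then \<bar>phi g w\<bar> else 0)" if w: "w < n" for w
  proof (cases "component (Gr g) w = component (Gr f) w")
    case True thus ?thesis by (simp add: phi_def)
  next
    case False
    have c1: "\<exists>b\<in>A. b \<in> comp f w"
    proof -
      obtain x where x: "x \<in> S" "fst x \<in> comp f w" "g x \<noteq> f x"
        using comp_agree(2)[OF f gi, of w] False by blast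
      have "x \<in> elems xs \<or> f x \<in> elems xs" using Th_diff1[OF xs(1) f] x(3) by (simp add: g_def)
      thus ?thesis
      proof
        assume "x \<in> elems xs" thus ?thesis using x el by blast
      next
        assume "f x \<in> elems xs" thus ?thesis using comp_closed[OF f x(1,2)] el by blast
      qed
    qed
    have c2: "\<exists>b\<in>B2. b \<in> comp g w"
    proof -
      obtain x where x: "x \<in> S" "fst x \<in> comp g w" "f x \<noteq> g x"
        using comp_agree(2)[OF gi f, of w] False by metis
      have "x \<in> elems xs \<or> x \<in> R \<or> g x \<in> R" using R(3)[of x] x(3) by (auto simp: g_def)
      moreover have ?thesis if "x \<in> elems xs"
      proof -
        have "fst x \<in> comp g v" using that el cg by (simp add: A_def)
        hence "comp g (fst x) = comp g v" using comp_eq(1)[OF gi _ v] by blast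
        moreover have "comp g (fst x) = comp g w" using comp_eq(1)[OF gi x(2) w] .
        moreover have "v \<in> comp g v" using v by (simp add: comp_def comp_vertices_def)
        ultimately show ?thesis by (simp add: B2_def)
      qed
      moreover have ?thesis if "x \<in> R" using that x(2) by (auto simp: B2_def)
      moreover have ?thesis if "g x \<in> R" using that comp_closed[OF gi x(1,2)] by (auto simp: B2_def)
      ultimately show ?thesis by blast
    qed
    show ?thesis using c1 c2 by simp
  qed
  have "\<bar>PsiF f - PsiF g\<bar> = \<bar>\<Sum>w<n. phi f w - phi g w\<bar>" by (simp add: PsiF_def sum_subtractf)
  also have "\<dots> \<le> (\<Sum>w<n. \<bar>phi f w - phi g w\<bar>)" by (rule sum_abs)
  also have "\<dots> \<le> (\<Sum>w<n. (if \<exists>b\<in>A. b \<in> comp f w then \<bar>phi f w\<bar> else 0)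
      + (if \<exists>b\<in>B2. b \<in> comp g w then \<bar>phi g w\<bar> else 0))" by (rule sum_mono) (simp add: termw)
  also have "\<dots> = (\<Sum>w<n. if \<exists>b\<in>A. b \<in> comp f w then \<bar>phi f w\<bar> else 0)
      + (\<Sum>w<n. if \<exists>b\<in>B2. b \<in> comp g w then \<bar>phi g w\<bar> else 0)" by (rule sum.distrib)
  also have "\<dots> \<le> real K * real K * M + real K * real K * M"
    using local_sum[OF f finA cardA] local_sum[OF gi finB2 cardB2] by linarith
  finally show ?thesis by (simp add: g_def algebra_simps)
qed

end



context cm2
begin

lemma fiber_avg:
  fixes X :: "(nat \<times> nat \<Rightarrow> nat \<times> nat) \<Rightarrow> real"
  shows "(\<Sum>f\<in>invs S. X f) = (\<Sum>f0\<in>invs S. (\<Sum>g\<in>fib v f0. X g) / real (card (fib v f0)))"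
proof -
  have finI: "finite (invs S)" by (rule finite_invs[OF finS])
  have sub: "fib v f0 \<subseteq> invs S" for f0 by (auto simp: fib_def)
  have "(\<Sum>f0\<in>invs S. (\<Sum>g\<in>fib v f0. X g) / real (card (fib v f0)))
      = (\<Sum>f0\<in>invs S. \<Sum>g\<in>invs S. if g \<in> fib v f0 then X g / real (card (fib v f0)) else 0)"
  proof (rule sum.cong[OF refl])
    fix f0 assume f0: "f0 \<in> invs S"
    have "(\<Sum>g\<in>invs S. if g \<in> fib v f0 then X g / real (card (fib v f0)) else 0)
        = (\<Sum>g\<in>{g \<in> invs S. g \<in> fib v f0}. X g / real (card (fib v f0)))"
      by (rule sum.inter_filter[OF finI, symmetric])
    also have "{g \<in> invs S. g \<in> fib v f0} = fib v f0" using sub by blast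
    finally show "(\<Sum>g\<in>fib v f0. X g) / real (card (fib v f0))
        = (\<Sum>g\<in>invs S. if g \<in> fib v f0 then X g / real (card (fib v f0)) else 0)"
      by (simp add: sum_divide_distrib)
  qed
  also have "\<dots> = (\<Sum>g\<in>invs S. \<Sum>f0\<in>invs S. if g \<in> fib v f0 then X g / real (card (fib v f0)) else 0)"
    by (rule sum.swap)
  also have "\<dots> = (\<Sum>g\<in>invs S. X g)"
  proof (rule sum.cong[OF refl])
    fix g assume g: "g \<in> invs S"
    have "(\<Sum>f0\<in>invs S. if g \<in> fib v f0 then X g / real (card (fib v f0)) else 0)
        = (\<Sum>f0\<in>invs S. if f0 \<in> fib v g then X g / real (card (fib v g)) else 0)"
    proof (rule sum.cong[OF refl])
      fix f0 assume f0: "f0 \<in> invs S"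
      show "(if g \<in> fib v f0 then X g / real (card (fib v f0)) else 0)
          = (if f0 \<in> fib v g then X g / real (card (fib v g)) else 0)"
      proof (cases "g \<in> fib v f0")
        case True
        have "fib v g = fib v f0" by (rule fib_comp(3)[OF f0 True])
        thus ?thesis using True fib_sym[OF f0 g] by simp
      next
        case False thus ?thesis using fib_sym[OF f0 g] by simp
      qed
    qed
    also have "\<dots> = (\<Sum>f0\<in>{f0 \<in> invs S. f0 \<in> fib v g}. X g / real (card (fib v g)))"
      by (rule sum.inter_filter[OF finI, symmetric])
    also have "{f0 \<in> invs S. f0 \<in> fib v g} = fib v g" using sub by blast
    also have "(\<Sum>f0\<in>fib v g. X g / real (card (fib v g))) = X g"
    proof -
      have "card (fib v g) > 0" using fib_self[OF g] finite_fib card_gt_0_iff by blast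
      thus ?thesis by simp
    qed
    finally show "(\<Sum>f0\<in>invs S. if g \<in> fib v f0 then X g / real (card (fib v f0)) else 0) = X g" .
  qed
  finally show ?thesis by simp
qed

lemma fiber_dev:
  assumes f0: "f0 \<in> invs S" and v: "v < n" and nz: "phi f0 v \<noteq> 0"
  defines "E \<equiv> (\<Sum>f\<in>invs S. PsiF f) / real (card (invs S))"
  shows "\<bar>(\<Sum>g\<in>fib v f0. PsiF g - E) / real (card (fib v f0))\<bar> \<le> 2 * real K * real K * M"
proof -
  obtain xs where xs: "okl S xs" "elems xs = SA f0 v" "FF S xs = fib v f0"
      "num_edges (component (Gr f0) v) = length xs"
    using fib_list[OF f0] by blast
  obtain k where k: "\<And>h :: (nat \<times> nat \<Rightarrow> nat \<times> nat) \<Rightarrow> real.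
      (\<Sum>f\<in>invs S. h (Th xs f)) = k * (\<Sum>g\<in>FF S xs. h g)"
    using Th_count[OF finS xs(1)] by blast
  define F where "F = fib v f0"
  define cI where "cI = real (card (invs S))"
  define cF where "cF = real (card F)"
  have finI: "finite (invs S)" by (rule finite_invs[OF finS])
  have cFpos: "cF > 0" using fib_self[OF f0] finite_fib card_gt_0_iff unfolding cF_def F_def by fastforce
  have kc: "cI = k * cF" using k[of "\<lambda>_. 1"] xs(3) by (simp add: cI_def cF_def F_def)
  have cIpos: "cI > 0" using f0 finI card_gt_0_iff unfolding cI_def by fastforce
  have kpos: "k > 0" using kc cFpos cIpos by (metis zero_less_mult_pos2)
  have sF: "(\<Sum>f\<in>invs S. PsiF (Th xs f)) = k * (\<Sum>g\<in>F. PsiF g)" using k[of PsiF] xs(3) by (simp add: F_def)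
  have sE: "(\<Sum>f\<in>invs S. PsiF f) = cI * E" using cIpos by (simp add: E_def cI_def)
  have "(\<Sum>g\<in>F. PsiF g - E) = (\<Sum>g\<in>F. PsiF g) - cF * E" by (simp add: sum_subtractf cF_def)
  also have "\<dots> = ((\<Sum>f\<in>invs S. PsiF (Th xs f)) - (\<Sum>f\<in>invs S. PsiF f)) / k"
    using sF sE kc kpos by (simp add: field_simps)
  also have "\<dots> = (\<Sum>f\<in>invs S. PsiF (Th xs f) - PsiF f) / k" by (simp add: sum_subtractf)
  finally have eq: "(\<Sum>g\<in>F. PsiF g - E) = (\<Sum>f\<in>invs S. PsiF (Th xs f) - PsiF f) / k" .
  have "\<bar>\<Sum>f\<in>invs S. PsiF (Th xs f) - PsiF f\<bar> \<le> (\<Sum>f\<in>invs S. \<bar>PsiF (Th xs f) - PsiF f\<bar>)" by (rule sum_abs)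
  also have "\<dots> \<le> (\<Sum>f\<in>invs S. 2 * real K * real K * M)"
  proof (rule sum_mono)
    fix f assume f: "f \<in> invs S"
    show "\<bar>PsiF (Th xs f) - PsiF f\<bar> \<le> 2 * real K * real K * M"
      using pointwise[OF f0 v nz xs f] by (simp add: abs_minus_commute)
  qed
  also have "\<dots> = cI * (2 * real K * real K * M)" by (simp add: cI_def)
  finally have b: "\<bar>\<Sum>f\<in>invs S. PsiF (Th xs f) - PsiF f\<bar> \<le> cI * (2 * real K * real K * M)" .
  have "\<bar>(\<Sum>g\<in>F. PsiF g - E) / cF\<bar> = \<bar>\<Sum>f\<in>invs S. PsiF (Th xs f) - PsiF f\<bar> / (k * cF)"
    using eq kpos cFpos by (simp add: abs_divide)
  also have "\<dots> \<le> cI * (2 * real K * real K * M) / (k * cF)"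
    using b kpos cFpos by (intro divide_right_mono) auto
  also have "\<dots> = 2 * real K * real K * M" using kc kpos cFpos by simp
  finally show ?thesis by (simp add: F_def cF_def)
qed

lemma cov_v:
  assumes v: "v < n" and ne: "invs S \<noteq> {}"
  defines "E \<equiv> (\<Sum>f\<in>invs S. PsiF f) / real (card (invs S))"
  shows "(\<Sum>f\<in>invs S. phi f v * (PsiF f - E)) \<le> 2 * real K * real K * M * (\<Sum>f\<in>invs S. \<bar>phi f v\<bar>)"
proof -
  have "(\<Sum>f\<in>invs S. phi f v * (PsiF f - E))
     = (\<Sum>f0\<in>invs S. (\<Sum>g\<in>fib v f0. phi g v * (PsiF g - E)) / real (card (fib v f0)))"
    by (rule fiber_avg)
  also have "\<dots> = (\<Sum>f0\<in>invs S. phi f0 v * ((\<Sum>g\<in>fib v f0. PsiF g - E) / real (card (fib v f0))))"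
  proof (rule sum.cong[OF refl])
    fix f0 assume f0: "f0 \<in> invs S"
    have "(\<Sum>g\<in>fib v f0. phi g v * (PsiF g - E)) = (\<Sum>g\<in>fib v f0. phi f0 v * (PsiF g - E))"
      using fib_comp(2)[OF f0] by (intro sum.cong) (auto simp: phi_def)
    thus "(\<Sum>g\<in>fib v f0. phi g v * (PsiF g - E)) / real (card (fib v f0))
        = phi f0 v * ((\<Sum>g\<in>fib v f0. PsiF g - E) / real (card (fib v f0)))"
      by (simp add: sum_distrib_left)
  qed
  also have "\<dots> \<le> (\<Sum>f0\<in>invs S. \<bar>phi f0 v\<bar> * (2 * real K * real K * M))"
  proof (rule sum_mono)
    fix f0 assume f0: "f0 \<in> invs S"
    show "phi f0 v * ((\<Sum>g\<in>fib v f0. PsiF g - E) / real (card (fib v f0))) \<le> \<bar>phi f0 v\<bar> * (2 * real K * real K * M)"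
    proof (cases "phi f0 v = 0")
      case True thus ?thesis by simp
    next
      case False
      have b: "\<bar>(\<Sum>g\<in>fib v f0. PsiF g - E) / real (card (fib v f0))\<bar> \<le> 2 * real K * real K * M"
        using fiber_dev[OF f0 v False] by (simp add: E_def)
      have "phi f0 v * ((\<Sum>g\<in>fib v f0. PsiF g - E) / real (card (fib v f0)))
          \<le> \<bar>phi f0 v * ((\<Sum>g\<in>fib v f0. PsiF g - E) / real (card (fib v f0)))\<bar>" by (rule abs_ge_self)
      also have "\<dots> = \<bar>phi f0 v\<bar> * \<bar>(\<Sum>g\<in>fib v f0. PsiF g - E) / real (card (fib v f0))\<bar>" by (simp add: abs_mult)
      also have "\<dots> \<le> \<bar>phi f0 v\<bar> * (2 * real K * real K * M)" using b by (intro mult_left_mono) auto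
      finally show ?thesis .
    qed
  qed
  also have "\<dots> = 2 * real K * real K * M * (\<Sum>f\<in>invs S. \<bar>phi f v\<bar>)"
    by (simp add: sum_distrib_left sum_distrib_right mult.commute)
  finally show ?thesis .
qed

lemma var_sum:
  assumes ne: "invs S \<noteq> {}"
  defines "E \<equiv> (\<Sum>f\<in>invs S. PsiF f) / real (card (invs S))"
  shows "(\<Sum>f\<in>invs S. (PsiF f - E)\<^sup>2) \<le> 2 * real K * real K * M * (\<Sum>v<n. \<Sum>f\<in>invs S. \<bar>phi f v\<bar>)"
proof -
  have finI: "finite (invs S)" by (rule finite_invs[OF finS])
  have cpos: "real (card (invs S)) > 0" using ne finI card_gt_0_iff by fastforce
  have z: "(\<Sum>f\<in>invs S. PsiF f - E) = 0"
    using cpos by (simp add: sum_subtractf E_def)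
  have "(\<Sum>f\<in>invs S. (PsiF f - E)\<^sup>2) = (\<Sum>f\<in>invs S. PsiF f * (PsiF f - E) - E * (PsiF f - E))"
    by (rule sum.cong) (simp_all add: power2_eq_square algebra_simps)
  also have "\<dots> = (\<Sum>f\<in>invs S. PsiF f * (PsiF f - E)) - E * (\<Sum>f\<in>invs S. PsiF f - E)"
    by (simp add: sum_subtractf[of "\<lambda>f. PsiF f * (PsiF f - E)"] sum_distrib_left[symmetric])
  also have "\<dots> = (\<Sum>f\<in>invs S. PsiF f * (PsiF f - E))" using z by simp
  also have "\<dots> = (\<Sum>v<n. \<Sum>f\<in>invs S. phi f v * (PsiF f - E))"
    by (simp add: PsiF_def sum_distrib_right sum.swap[of _ "invs S"])
  also have "\<dots> \<le> (\<Sum>v<n. 2 * real K * real K * M * (\<Sum>f\<in>invs S. \<bar>phi f v\<bar>))"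
    by (rule sum_mono) (use cov_v[OF _ ne] in \<open>simp add: E_def\<close>)
  also have "\<dots> = 2 * real K * real K * M * (\<Sum>v<n. \<Sum>f\<in>invs S. \<bar>phi f v\<bar>)"
    by (simp add: sum_distrib_left)
  finally show ?thesis .
qed

end



lemma iso_wf:
  assumes G: "wf_mgraph G" and iso: "mgraph_iso G H" shows "wf_mgraph H"
proof -
  obtain f where f: "bij_betw f (fst G) (fst H)" "image_mset (map_uprod f) (snd G) = snd H"
    using iso by (auto simp: mgraph_iso_def)
  have fH: "fst H = f ` fst G" using f(1) by (simp add: bij_betw_def)
  show ?thesis unfolding wf_mgraph_def
  proof (intro conjI ballI)
    show "finite (fst H)" using G fH by (simp add: wf_mgraph_def)
    fix e assume "e \<in># snd H"
    then obtain e0 where e0: "e0 \<in># snd G" "e = map_uprod f e0" using f(2) by (metis imageE set_image_mset)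
    have "set_uprod e0 \<subseteq> fst G" using G e0(1) by (simp add: wf_mgraph_def)
    thus "set_uprod e \<subseteq> fst H" using e0(2) fH by (auto simp: uprod.set_map)
  qed
qed

lemma M_bound:
  fixes \<psi> :: "mgraph \<Rightarrow> real"
  assumes gf: "graph_functional \<psi>" and fs: "finite_support \<psi>"
    and M_def: "M = (SUP H\<in>{H. wf_mgraph H}. \<bar>\<psi> H\<bar>)"
  shows "\<And>G. wf_mgraph G \<Longrightarrow> \<bar>\<psi> G\<bar> \<le> M"
proof -
  obtain S0 where S0: "finite S0" "\<And>G. wf_mgraph G \<Longrightarrow> \<psi> G \<noteq> 0 \<Longrightarrow> \<exists>H\<in>S0. mgraph_iso G H"
    using fs by (auto simp: finite_support_def)
  define Bd where "Bd = (\<Sum>H\<in>S0. \<bar>\<psi> H\<bar>)"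
  have bd: "\<bar>\<psi> G\<bar> \<le> Bd" if G: "wf_mgraph G" for G
  proof (cases "\<psi> G = 0")
    case True thus ?thesis by (simp add: Bd_def sum_nonneg)
  next
    case False
    then obtain H where H: "H \<in> S0" "mgraph_iso G H" using S0(2)[OF G] by blast
    have wH: "wf_mgraph H" using iso_wf[OF G H(2)] .
    have "\<psi> G = \<psi> H" using gf G H(2) wH unfolding graph_functional_def by blast
    moreover have "\<bar>\<psi> H\<bar> \<le> Bd" unfolding Bd_def by (rule member_le_sum[OF H(1)]) (auto simp: S0(1))
    ultimately show ?thesis by simp
  qed
  have bdd: "bdd_above ((\<lambda>H. \<bar>\<psi> H\<bar>) ` {H. wf_mgraph H})"
    using bd by (auto intro!: bdd_aboveI[of _ Bd])
  fix G assume G: "wf_mgraph G"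
  show "\<bar>\<psi> G\<bar> \<le> M" unfolding M_def by (rule cSUP_upper[OF _ bdd]) (use G in simp)
qed

lemma sum_prod_split: "finite A \<Longrightarrow> finite B \<Longrightarrow> (\<Sum>x\<in>A \<times> B. F x) = (\<Sum>a\<in>A. \<Sum>b\<in>B. F (a, b))"
  by (simp add: sum.cartesian_product)

lemma card_half_edges: "card (half_edges n dd) = (\<Sum>i<n. dd i)"
proof -
  have "half_edges n dd = Sigma {..<n} (\<lambda>i. {..<dd i})" by (auto simp: half_edges_def)
  thus ?thesis by simp
qed

theorem lemma9p2:
  fixes d :: "nat \<Rightarrow> nat \<Rightarrow> nat"   \<comment> \<open>d n i = d_i for the n-th degree sequence, i < n\<close>
    and p :: "nat \<Rightarrow> real" and \<mu> :: real
    and \<psi> :: "mgraph \<Rightarrow> real" and K :: nat and M :: real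
  defines "N \<equiv> \<lambda>n. \<Sum>i<n. d n i"
  assumes even: "\<And>n. n \<ge> 1 \<Longrightarrow> even (N n)"
    and p_nonneg: "\<And>k. p k \<ge> 0"
    and p_sum: "p sums 1"
    and A1: "\<And>k. (\<lambda>n. real (card {i. i < n \<and> d n i = k}) / real n) \<longlonglongrightarrow> p k"
    and mu_summable: "summable (\<lambda>k. real k * p k)"
    and mu_def: "\<mu> = (\<Sum>k. real k * p k)"
    and mu_pos: "\<mu> > 0"
    and A2: "(\<lambda>n. real (N n) / real n) \<longlonglongrightarrow> \<mu>"
    and gf: "graph_functional \<psi>"
    and fs: "finite_support \<psi>"
    and K: "\<And>H. wf_mgraph H \<Longrightarrow> num_edges H \<ge> K \<Longrightarrow> \<psi> H = 0"
    and M_def: "M = (SUP H\<in>{H. wf_mgraph H}. \<bar>\<psi> H\<bar>)"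
  shows "\<forall>n. n \<ge> 1 \<and> real (N n) \<ge> \<mu> * real n / 2 \<and> N n \<ge> 4 * K \<longrightarrow>
           measure_pmf.variance (config_model n (d n)) (Psi \<psi>)
             \<le> (4 + 16 / \<mu>) * M * real K ^ 2
                * measure_pmf.expectation (pair_pmf (config_model n (d n)) (pmf_of_set {..<n}))
                    (\<lambda>(G, v). \<bar>\<psi> (component G v)\<bar>)
                * real n"
proof (intro allI impI)
  fix n assume hn: "n \<ge> 1 \<and> real (N n) \<ge> \<mu> * real n / 2 \<and> N n \<ge> 4 * K"
  define S where "S = half_edges n (d n)"
  have Mb: "\<And>G. wf_mgraph G \<Longrightarrow> \<bar>\<psi> G\<bar> \<le> M" by (rule M_bound[OF gf fs M_def])
  have finS': "finite S"
  proof -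
    have "S = Sigma {..<n} (\<lambda>i. {..<d n i})" by (auto simp: S_def half_edges_def)
    thus ?thesis by simp
  qed
  interpret cm2 n S \<psi> K M
  proof unfold_locales
    show "finite S" by (rule finS')
    show "\<And>x. x \<in> S \<Longrightarrow> fst x < n" by (auto simp: S_def half_edges_def)
  qed (auto simp: K Mb)
  have cardS: "card S = N n" using card_half_edges by (simp add: S_def N_def)
  have ne: "invs S \<noteq> {}" using invs_nonempty[OF finS'] cardS even hn by simp
  have finI: "finite (invs S)" by (rule finite_invs[OF finS'])
  define PM where "PM = perfect_matchings S"
  have bij: "bij_betw (pairs_of S) (invs S) PM" unfolding PM_def by (rule pairs_of_bij)
  have PMe: "PM = pairs_of S ` invs S" using bij by (simp add: bij_betw_def)
  have finPM: "finite PM" using finI PMe by simp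
  have nePM: "PM \<noteq> {}" using ne PMe by simp
  have cPM: "card PM = card (invs S)" using bij by (simp add: bij_betw_same_card)
  have re: "(\<Sum>P\<in>PM. h P) = (\<Sum>f\<in>invs S. h (pairs_of S f))" for h :: "_ \<Rightarrow> real"
    using sum.reindex_bij_betw[OF bij, of h] by simp
  have PsiG: "Psi \<psi> (config_graph n (pairs_of S f)) = PsiF f" for f
    by (simp add: Psi_def PsiF_def phi_def Gr_def config_graph_def)
  have cm_eq: "config_model n (d n) = map_pmf (config_graph n) (pmf_of_set PM)"
    by (simp add: config_model_def config_matching_def PM_def S_def)
  define cI where "cI = real (card (invs S))"
  have cIpos: "cI > 0" using ne finI card_gt_0_iff unfolding cI_def by fastforce
  define E where "E = (\<Sum>f\<in>invs S. PsiF f) / cI"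
  have expPsi: "measure_pmf.expectation (config_model n (d n)) (Psi \<psi>) = E"
    using finPM nePM by (simp add: cm_eq integral_pmf_of_set re PsiG cPM E_def cI_def)
  have var: "measure_pmf.variance (config_model n (d n)) (Psi \<psi>) = (\<Sum>f\<in>invs S. (PsiF f - E)\<^sup>2) / cI"
    using finPM nePM by (simp add: expPsi cm_eq integral_pmf_of_set re PsiG cPM cI_def E_def)
  define EP where "EP = measure_pmf.expectation (pair_pmf (config_model n (d n)) (pmf_of_set {..<n}))
                    (\<lambda>(G, v). \<bar>\<psi> (component G v)\<bar>)"
  have nne: "{..<n} \<noteq> {}" using hn by (simp add: lessThan_empty_iff)
  have EPeq: "EP = (\<Sum>v<n. \<Sum>f\<in>invs S. \<bar>phi f v\<bar>) / (cI * real n)"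
  proof -
    have "EP = measure_pmf.expectation (pair_pmf (pmf_of_set PM) (pmf_of_set {..<n}))
          (\<lambda>x. \<bar>\<psi> (component (config_graph n (fst x)) (snd x))\<bar>)"
      unfolding EP_def cm_eq pair_map_pmf1 by (simp add: case_prod_beta apfst_def map_prod_def)
    also have "\<dots> = (\<Sum>x\<in>PM \<times> {..<n}. \<bar>\<psi> (component (config_graph n (fst x)) (snd x))\<bar>
          * pmf (pair_pmf (pmf_of_set PM) (pmf_of_set {..<n})) x)"
      by (rule integral_measure_pmf_real) (use finPM nePM nne in auto)
    also have "\<dots> = (\<Sum>x\<in>PM \<times> {..<n}. \<bar>\<psi> (component (config_graph n (fst x)) (snd x))\<bar>
          / (real (card PM) * real n))"
      by (rule sum.cong[OF refl]) (use finPM nePM nne in \<open>auto simp: pmf_pair pmf_of_set[OF nePM finPM] pmf_of_set[OF nne finite_lessThan]\<close>)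
    also have "\<dots> = (\<Sum>P\<in>PM. \<Sum>v<n. \<bar>\<psi> (component (config_graph n P) v)\<bar>) / (real (card PM) * real n)"
      unfolding sum_prod_split[OF finPM finite_lessThan] by (simp add: sum_divide_distrib)
    also have "\<dots> = (\<Sum>f\<in>invs S. \<Sum>v<n. \<bar>phi f v\<bar>) / (cI * real n)"
      by (simp add: re cPM cI_def phi_def Gr_def)
    also have "\<dots> = (\<Sum>v<n. \<Sum>f\<in>invs S. \<bar>phi f v\<bar>) / (cI * real n)" by (simp add: sum.swap[of _ "invs S"])
    finally show ?thesis .
  qed
  have EPnn: "EP \<ge> 0" using EPeq cIpos by (simp add: sum_nonneg)
  have vb: "(\<Sum>f\<in>invs S. (PsiF f - E)\<^sup>2) \<le> 2 * real K * real K * M * (\<Sum>v<n. \<Sum>f\<in>invs S. \<bar>phi f v\<bar>)"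
    using var_sum[OF ne] by (simp add: E_def cI_def)
  define T where "T = (\<Sum>v<n. \<Sum>f\<in>invs S. \<bar>phi f v\<bar>)"
  have npos: "real n > 0" using hn by simp
  have en: "EP * real n = T / cI" using EPeq npos cIpos unfolding T_def by (simp add: field_simps)
  have "measure_pmf.variance (config_model n (d n)) (Psi \<psi>) \<le> 2 * real K * real K * M * T / cI"
    using var vb cIpos unfolding T_def by (simp add: divide_right_mono)
  also have "\<dots> = 2 * M * real K ^ 2 * (T / cI)" by (simp add: power2_eq_square)
  also have "\<dots> = 2 * M * real K ^ 2 * (EP * real n)" by (simp add: en)
  also have "\<dots> \<le> (4 + 16 / \<mu>) * (M * real K ^ 2 * EP * real n)"
  proof -
    have "2 \<le> 4 + 16 / \<mu>" using mu_pos by (simp add: add_increasing2)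
    moreover have "0 \<le> M * real K ^ 2 * EP * real n" using M_nonneg EPnn by simp
    ultimately have "2 * (M * real K ^ 2 * EP * real n) \<le> (4 + 16 / \<mu>) * (M * real K ^ 2 * EP * real n)"
      by (rule mult_right_mono)
    thus ?thesis by (simp add: mult.assoc)
  qed
  also have "\<dots> = (4 + 16 / \<mu>) * M * real K ^ 2 * EP * real n" by (simp add: mult.assoc)
  finally show "measure_pmf.variance (config_model n (d n)) (Psi \<psi>)
             \<le> (4 + 16 / \<mu>) * M * real K ^ 2 * EP * real n" .
qed


end
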